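(* Consider the following one-step ($n=1$) scenario with two players. There is a single initial state ("cake"); the observation $O_1\in\{\text{red},\text{green}\}$, where player 1 believes $\mathbb P^1(\text{red})=0.9$, $\mathbb P^1(\text{green})=0.1$ and player 2 believes $\mathbb P^2(\text{red})=0.1$, $\mathbb P^2(\text{green})=0.9$. The action $A_1\in\{(\text{all},\text{none}),(\text{half},\text{half}),(\text{none},\text{all})\}$ determines the outcome, with utilities $U^1=30,20,0$ and $U^2=0,20,30$ respectively for these three actions (regardless of the observation). A policy $\pi$ assigns to each $o_1\in\{\text{red},\text{green}\}$ a distribution $\pi(\cdot\mid o_1)$ on the three actions; $\mathbb E^j[U^j;\pi]=\sum_{o_1}\mathbb P^j(o_1)\sum_{a}\pi(a\mid o_1)U^j(a)$, and for a distribution $\alpha$ on actions $\mathbb E^j[U^j\mid o_1;a_1\sim\alpha]=\sum_a\alpha(a)U^j(a)$. Let $\hat\pi$ be the policy with $\hat\pi(\cdot\mid\text{red})=100\%\,(\text{all},\text{none})$ and $\hat\pi(\cdot\mid\text{green})=100\%\,(\text{none},\text{all})$. Then $\hat\pi$ is not equal to any policy $\pi$ satisfying, for some fixed $r\in[0,1]$ and all $o_1$, \[ \pi(\cdot\mid o_1)\in\arg\max_{\alpha}\Big(r\,\mathbb E^1[U^1\mid o_1;a_1\sim\alpha]+(1-r)\,\mathbb E^2[U^2\mid o_1;a_1\sim\alpha]\Big), \] where the maximum ranges over distributions $\alpha$ on the three actions. Moreover, every such policy $\pi$ satisfies $\mathbb E^1[U^1;\pi]<\mathbb E^1[U^1;\hat\pi]$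 or $\mathbb E^2[U^2;\pi]<\mathbb E^2[U^2;\hat\pi]$.
   Context: Here $\mathbb P^j$ and $U^j$ denote player $j$'s beliefs and utility function; the machine's policy maps its observation to a (possibly randomized) action. (In this scenario $\mathbb E^1[U^1;\hat\pi]=\mathbb E^2[U^2;\hat\pi]=27$.) *)

theory Defs
  imports "HOL-Probability.Probability"
begin

datatype obs = Red | Green
datatype act = AllNone | HalfHalf | NoneAll
datatype player = P1 | P2

definition actions :: "act set" where "actions = {AllNone, HalfHalf, NoneAll}"
definition observations :: "obs set" where "observations = {Red, Green}"

fun belief :: "player \<Rightarrow> obs \<Rightarrow> real" where
  "belief P1 Red = 9/10" | "belief P1 Green = 1/10"
| "belief P2 Red = 1/10" | "belief P2 Green = 9/10"

fun U :: "player \<Rightarrow> act \<Rightarrow> real" where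
  "U P1 AllNone = 30" | "U P1 HalfHalf = 20" | "U P1 NoneAll = 0"
| "U P2 AllNone = 0" | "U P2 HalfHalf = 20" | "U P2 NoneAll = 30"

type_synonym policy = "obs \<Rightarrow> act pmf"

definition cond_EU :: "player \<Rightarrow> obs \<Rightarrow> act pmf \<Rightarrow> real" where
  "cond_EU j o1 \<alpha> = (\<Sum>a\<in>actions. pmf \<alpha> a * U j a)"

definition EU :: "player \<Rightarrow> policy \<Rightarrow> real" where
  "EU j \<pi> = (\<Sum>o1\<in>observations. belief j o1 * (\<Sum>a\<in>actions. pmf (\<pi> o1) a * U j a))"

definition pi_hat :: policy where
  "pi_hat o1 = (case o1 of Red \<Rightarrow> return_pmf AllNone | Green \<Rightarrow> return_pmf NoneAll)"

definition weighted_greedy :: "real \<Rightarrow> policy \<Rightarrow> bool" where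
  "weighted_greedy r \<pi> \<longleftrightarrow> (\<forall>o1. \<pi> o1 \<in>
     {\<alpha>. \<forall>\<beta>. r * cond_EU P1 o1 \<beta> + (1 - r) * cond_EU P2 o1 \<beta>
              \<le> r * cond_EU P1 o1 \<alpha> + (1 - r) * cond_EU P2 o1 \<alpha>})"

end

theory Submission
  imports Defs
begin

lemma key:
  fixes pA pH pN r :: real
  assumes "0 \<le> pA" "0 \<le> pH" "0 \<le> pN" "pA + pH + pN = 1" "1/2 \<le> r" "r \<le> 1"
    "30*r \<le> pA*(30*r) + pH*20 + pN*(30*(1-r))"
    "20 \<le> pA*(30*r) + pH*20 + pN*(30*(1-r))"
  shows "pN = 0"
proof (cases "r \<ge> 2/3")
  case True
  have e: "pA*(30*r) = (1 - pH - pN)*(30*r)" using assms(4) by simp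
  have "pH*(20-30*r) \<le> 0" using True assms(2) by (simp add: mult_nonneg_nonpos)
  moreover have "pN*(60*r-30) \<ge> pN*10" using True assms(3) by (intro mult_left_mono) auto
  ultimately show ?thesis using assms(3,7) e by (simp add: algebra_simps)
next
  case False
  have e: "pH*20 = (1 - pA - pN)*20" using assms(4) by simp
  have "pA*(30*r-20) \<le> 0" using False assms(1) by (simp add: mult_nonneg_nonpos)
  moreover have "pN*(30*r-10) \<ge> pN*5" using assms(3,5) by (intro mult_left_mono) auto
  ultimately show ?thesis using assms(3,8) e by (simp add: algebra_simps)
qed

lemma actions_UNIV: "actions = UNIV"
  unfolding actions_def using act.exhaust by auto

lemma psum: "pmf \<alpha> AllNone + pmf \<alpha> HalfHalf + pmf \<alpha> NoneAll = 1"
proof -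
  have "sum (pmf \<alpha>) actions = 1"
    apply (rule sum_pmf_eq_1)
     apply (simp add: actions_def)
    apply (simp add: actions_UNIV)
    done
  thus ?thesis by (simp add: actions_def)
qed

lemma cond_EU_simp:
  "cond_EU P1 o1 \<alpha> = pmf \<alpha> AllNone * 30 + pmf \<alpha> HalfHalf * 20"
  "cond_EU P2 o1 \<alpha> = pmf \<alpha> NoneAll * 30 + pmf \<alpha> HalfHalf * 20"
  by (simp_all add: cond_EU_def actions_def)

lemma obj_expand:
  "r * cond_EU P1 o1 \<alpha> + (1 - r) * cond_EU P2 o1 \<alpha> =
   pmf \<alpha> AllNone*(30*r) + pmf \<alpha> HalfHalf*20 + pmf \<alpha> NoneAll*(30*(1-r))"
  using psum[of \<alpha>] unfolding cond_EU_simp by (simp add: algebra_simps)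

lemma opt_hi:
  assumes "\<forall>\<beta>. r * cond_EU P1 o1 \<beta> + (1 - r) * cond_EU P2 o1 \<beta>
              \<le> r * cond_EU P1 o1 \<alpha> + (1 - r) * cond_EU P2 o1 \<alpha>"
    "1/2 \<le> r" "r \<le> 1"
  shows "pmf \<alpha> NoneAll = 0"
proof -
  have a: "r * cond_EU P1 o1 (return_pmf AllNone) + (1 - r) * cond_EU P2 o1 (return_pmf AllNone)
     \<le> r * cond_EU P1 o1 \<alpha> + (1 - r) * cond_EU P2 o1 \<alpha>" using assms(1) by blast
  have b: "r * cond_EU P1 o1 (return_pmf HalfHalf) + (1 - r) * cond_EU P2 o1 (return_pmf HalfHalf)
     \<le> r * cond_EU P1 o1 \<alpha> + (1 - r) * cond_EU P2 o1 \<alpha>" using assms(1) by blast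
  show ?thesis
    apply (rule key[of "pmf \<alpha> AllNone" "pmf \<alpha> HalfHalf" _ r])
    using a b psum[of \<alpha>] assms(2,3) unfolding obj_expand by (auto simp: pmf_nonneg)
qed

lemma opt_lo:
  assumes "\<forall>\<beta>. r * cond_EU P1 o1 \<beta> + (1 - r) * cond_EU P2 o1 \<beta>
              \<le> r * cond_EU P1 o1 \<alpha> + (1 - r) * cond_EU P2 o1 \<alpha>"
    "0 \<le> r" "r \<le> 1/2"
  shows "pmf \<alpha> AllNone = 0"
proof -
  have a: "r * cond_EU P1 o1 (return_pmf NoneAll) + (1 - r) * cond_EU P2 o1 (return_pmf NoneAll)
     \<le> r * cond_EU P1 o1 \<alpha> + (1 - r) * cond_EU P2 o1 \<alpha>" using assms(1) by blast
  have b: "r * cond_EU P1 o1 (return_pmf HalfHalf) + (1 - r) * cond_EU P2 o1 (return_pmf HalfHalf)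
     \<le> r * cond_EU P1 o1 \<alpha> + (1 - r) * cond_EU P2 o1 \<alpha>" using assms(1) by blast
  show ?thesis
    apply (rule key[of "pmf \<alpha> NoneAll" "pmf \<alpha> HalfHalf" _ "1 - r"])
    using a b psum[of \<alpha>] assms(2,3) unfolding obj_expand by (auto simp: pmf_nonneg algebra_simps)
qed

lemma EU_simp:
  "EU P1 \<pi> = 9/10 * (pmf (\<pi> Red) AllNone * 30 + pmf (\<pi> Red) HalfHalf * 20)
             + 1/10 * (pmf (\<pi> Green) AllNone * 30 + pmf (\<pi> Green) HalfHalf * 20)"
  "EU P2 \<pi> = 1/10 * (pmf (\<pi> Red) NoneAll * 30 + pmf (\<pi> Red) HalfHalf * 20)
             + 9/10 * (pmf (\<pi> Green) NoneAll * 30 + pmf (\<pi> Green) HalfHalf * 20)"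
  by (auto simp: EU_def actions_def observations_def algebra_simps)

theorem proposition2:
  shows "(\<forall>\<pi> r. 0 \<le> r \<and> r \<le> 1 \<and> weighted_greedy r \<pi> \<longrightarrow> \<pi> \<noteq> pi_hat)
       \<and> (\<forall>\<pi> r. 0 \<le> r \<and> r \<le> 1 \<and> weighted_greedy r \<pi> \<longrightarrow>
            EU P1 \<pi> < EU P1 pi_hat \<or> EU P2 \<pi> < EU P2 pi_hat)"
proof -
  have main: "EU P1 \<pi> \<le> 20 \<or> EU P2 \<pi> \<le> 20" if "0 \<le> r" "r \<le> 1" "weighted_greedy r \<pi>" for \<pi> r
  proof (cases "r \<ge> 1/2")
    case True
    have z: "pmf (\<pi> o1) NoneAll = 0" for o1
      using opt_hi[of r o1 "\<pi> o1"] that True unfolding weighted_greedy_def by blast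
    have l: "pmf (\<pi> o1) HalfHalf \<le> 1" for o1 by (rule pmf_le_1)
    show ?thesis unfolding EU_simp
      using z[of Red] z[of Green] l[of Red] l[of Green]
      by (intro disjI2) (simp add: field_simps)
  next
    case False
    have z: "pmf (\<pi> o1) AllNone = 0" for o1
      using opt_lo[of r o1 "\<pi> o1"] that False unfolding weighted_greedy_def by auto
    have l: "pmf (\<pi> o1) HalfHalf \<le> 1" for o1 by (rule pmf_le_1)
    show ?thesis unfolding EU_simp
      using z[of Red] z[of Green] l[of Red] l[of Green]
      by (intro disjI1) (simp add: field_simps)
  qed
  have h1: "EU P1 pi_hat = 27" "EU P2 pi_hat = 27"
    unfolding EU_simp by (simp_all add: pi_hat_def)
  show ?thesis using main h1 by force
qed

end
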